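(* Let $\mathscr{O}\subset\mathbb{R}^n$ be non-empty and compact, $\lambda>0$ and $\mathfrak{c}>0$. Define $$R_{\mathfrak{c}}(x,\mathscr{O}):=\inf_{\alpha}\int_0^\infty\Big(\tfrac12|\alpha(s)|^2+\tfrac{\mathfrak{c}}2\operatorname{dist}(y^\alpha_x(s),\mathscr{O})^2\Big)e^{-\lambda s}\,ds,$$ where the infimum is over all measurable essentially bounded $\alpha:[0,\infty)\to\mathbb{R}^n$ and $y^\alpha_x(t)=x+\int_0^t\alpha(s)\,ds$. Then for all $x\in\mathbb{R}^n$, $$R_{\mathfrak{c}}(x,\mathscr{O})=C\,\operatorname{dist}(x,\mathscr{O})^2,\qquad C=\frac{-\lambda+\sqrt{\lambda^2+4\mathfrak{c}}}{4}>0.$$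
   Context: $\operatorname{dist}(x,\mathscr{O})=\min_{z\in\mathscr{O}}|x-z|$ denotes the Euclidean distance to the set. *)

theory Defs
  imports "HOL-Analysis.Analysis"
begin

definition admissible_control :: "(real \<Rightarrow> 'a::euclidean_space) \<Rightarrow> bool" where
  "admissible_control \<alpha> \<longleftrightarrow>
     set_borel_measurable lebesgue {0..} \<alpha> \<and>
     (\<exists>B. AE s in lebesgue. s \<in> {0..} \<longrightarrow> norm (\<alpha> s) \<le> B)"

definition traj :: "'a::euclidean_space \<Rightarrow> (real \<Rightarrow> 'a) \<Rightarrow> real \<Rightarrow> 'a" where
  "traj x \<alpha> t = x + (LINT s:{0..t}|lebesgue. \<alpha> s)"

definition cost :: "real \<Rightarrow> real \<Rightarrow> 'a::euclidean_space set \<Rightarrow> 'a \<Rightarrow> (real \<Rightarrow> 'a) \<Rightarrow> ennreal" where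
  "cost c lam Obs x \<alpha> =
     (\<integral>\<^sup>+ s. ennreal ((1/2 * (norm (\<alpha> s))\<^sup>2 + c/2 * (infdist (traj x \<alpha> s) Obs)\<^sup>2) * exp (- lam * s))
             * indicator {0..} s \<partial>lebesgue)"

definition R_val :: "real \<Rightarrow> real \<Rightarrow> 'a::euclidean_space \<Rightarrow> 'a set \<Rightarrow> ennreal" where
  "R_val c lam x Obs = (INF \<alpha> \<in> {\<alpha>. admissible_control \<alpha>}. cost c lam Obs x \<alpha>)"

end

theory Submission imports Defs "HOL-Real_Asymp.Real_Asymp" begin

lemma exp_poly_lim: "lam > 0 \<Longrightarrow> (\<lambda>n. (1 + real n)^2 * exp (- lam * real n)) \<longlonglongrightarrow> 0" for lam :: real
  by real_asymp

lemma step_alg: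
  fixes C c lam B M h r1 r2 A w2 I :: real
  assumes C: "C > 0" and c: "c = 4*C^2 + 2*lam*C" and lam: "lam > 0"
    and h: "0 < h" "h \<le> 1" "lam * h \<le> 1"
    and r1: "0 \<le> r1" "r1 \<le> M" and r2: "0 \<le> r2" and A: "\<bar>r1 - r2\<bar> \<le> A" "A \<le> B * h"
    and w2: "0 \<le> w2" "w2 \<le> 1" and B: "0 \<le> B"
    and I: "w2 * (2*C*r1*A + (lam*C*r1^2 - c*r1*B*h)*h) \<le> I"
  shows "C*r1^2*(w2*exp(lam*h)) \<le> C*r2^2*w2 + I + (c*M*B + C*B^2 + C*M^2*lam^2)*h^2"
proof -
  define K where "K = c*M*B + C*B^2 + C*M^2*lam^2"
  have M0: "0 \<le> M" using r1 by linarith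
  have c0: "c > 0" using C lam c by (simp add: add_pos_pos)
  have K0: "0 \<le> K" unfolding K_def using c0 M0 B C by (intro add_nonneg_nonneg mult_nonneg_nonneg) auto
  have e: "exp (lam*h) \<le> 1 + lam*h + (lam*h)^2"
    using exp_bound[of "lam*h"] h lam by simp
  have A0: "0 \<le> A" using A by linarith
  have d1: "r1^2 - r2^2 \<le> A*(2*r1 + A)"
  proof -
    have "r1^2 - r2^2 = (r1 - r2)*(r1 + r2)" by (simp add: power2_eq_square algebra_simps)
    also have "\<dots> \<le> A*(r1+r2)" using A r1 r2 by (intro mult_right_mono) auto
    also have "\<dots> \<le> A*(2*r1 + A)" using A A0 by (intro mult_left_mono) auto
    finally show ?thesis .
  qed
  have AA: "A^2 \<le> B^2*h^2"
  proof -
    have "A^2 \<le> (B*h)^2" using A0 A by (intro power_mono) auto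
    then show ?thesis by (simp add: power_mult_distrib)
  qed
  have e2: "C*r1^2*(exp(lam*h) - 1) \<le> lam*C*h*r1^2 + C*M^2*lam^2*h^2"
  proof -
    have "C*r1^2*(exp(lam*h) - 1) \<le> C*r1^2*(lam*h + (lam*h)^2)"
      using e C by (intro mult_left_mono) auto
    also have "\<dots> = lam*C*h*r1^2 + C*r1^2*lam^2*h^2" by (simp add: algebra_simps power_mult_distrib)
    also have "\<dots> \<le> lam*C*h*r1^2 + C*M^2*lam^2*h^2"
    proof -
      have "r1^2 \<le> M^2" using r1 by (intro power_mono) auto
      then show ?thesis using C by (simp add: mult_right_mono)
    qed
    finally show ?thesis .
  qed
  define Y where "Y = C*(r1^2 - r2^2) + C*r1^2*(exp(lam*h) - 1)"
  define X where "X = 2*C*r1*A + (lam*C*r1^2 - c*r1*B*h)*h"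
  have "Y \<le> C*(A*(2*r1 + A)) + (lam*C*h*r1^2 + C*M^2*lam^2*h^2)"
    unfolding Y_def using d1 e2 C by (intro add_mono mult_left_mono) auto
  also have "\<dots> = 2*C*A*r1 + C*A^2 + lam*C*h*r1^2 + C*M^2*lam^2*h^2"
    by (simp add: algebra_simps power2_eq_square)
  also have "\<dots> \<le> 2*C*A*r1 + C*(B^2*h^2) + lam*C*h*r1^2 + C*M^2*lam^2*h^2"
    using AA C by simp
  finally have Y1: "Y \<le> 2*C*A*r1 + C*B^2*h^2 + lam*C*h*r1^2 + C*M^2*lam^2*h^2" by simp
  have "c*r1*B*h*h \<le> c*M*B*h^2"
    using r1 c0 B h by (simp add: power2_eq_square mult_right_mono mult_left_mono)
  then have "Y \<le> X + K*h^2" using Y1 unfolding X_def K_def by (simp add: algebra_simps power2_eq_square)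
  then have "w2*Y \<le> w2*X + w2*(K*h^2)" using w2 by (metis distrib_left mult_left_mono)
  also have "w2*(K*h^2) \<le> K*h^2" using w2 K0 by (simp add: mult_left_le_one_le)
  finally have "w2*Y \<le> I + K*h^2" using I unfolding X_def by linarith
  moreover have "C*r1^2*(w2*exp(lam*h)) = C*r2^2*w2 + w2*Y" unfolding Y_def by (simp add: algebra_simps)
  ultimately show ?thesis unfolding K_def by linarith
qed
lemma lower_bound:
  fixes \<beta> :: "real \<Rightarrow> 'a::euclidean_space" and Obs :: "'a set"
  assumes meas: "\<beta> \<in> borel_measurable lebesgue" and bnd: "\<And>s. norm (\<beta> s) \<le> B"
    and C: "C > 0" and c: "c = 4*C^2 + 2*lam*C" and lam: "lam > 0"
  shows "ennreal (C * (infdist x Obs)^2) \<le> cost c lam Obs x \<beta>"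
proof -
  have B0: "0 \<le> B" using bnd[of 0] norm_ge_zero order_trans by blast
  have c0: "c > 0" using C lam c by (simp add: add_pos_pos)
  have measn[measurable]: "(\<lambda>s. norm (\<beta> s)) \<in> borel_measurable lebesgue" using meas by measurable
  have si: "set_integrable lebesgue {a..b} \<beta>" for a b
    unfolding set_integrable_def
    by (rule integrableI_bounded_set_indicator[where B=B]) (use meas bnd in \<open>auto simp: emeasure_lborel_Icc_eq\<close>)
  have sin: "set_integrable lebesgue {a..b} (\<lambda>s. norm (\<beta> s))" for a b
    unfolding set_integrable_def
    by (rule integrableI_bounded_set_indicator[where B=B]) (use measn bnd in \<open>auto simp: emeasure_lborel_Icc_eq\<close>)
  have ion: "\<beta> integrable_on {a..b}" for a b
    using set_lebesgue_integral_eq_integral(1)[OF si] .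
  have ionn: "(\<lambda>s. norm (\<beta> s)) integrable_on {a..b}" for a b
    using set_lebesgue_integral_eq_integral(1)[OF sin] .
  define tr where "tr t = x + integral {0..t} \<beta>" for t
  have tr_eq: "traj x \<beta> t = tr t" for t
    unfolding traj_def tr_def using set_lebesgue_integral_eq_integral(2)[OF si] by simp
  have tr_diff: "tr b - tr a = integral {a..b} \<beta>" if "0 \<le> a" "a \<le> b" for a b
    using Henstock_Kurzweil_Integration.integral_combine[of 0 a b \<beta>, OF that ion] unfolding tr_def by (simp add: algebra_simps)
  have nb: "integral {a..b} (\<lambda>s. norm (\<beta> s)) \<le> B * (b - a)" if "a \<le> b" for a b
  proof -
    have "integral {a..b} (\<lambda>s. norm (\<beta> s)) \<le> integral {a..b} (\<lambda>s. B)"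
      by (intro integral_le ionn) (use bnd in auto)
    then show ?thesis using that by (simp add: mult.commute)
  qed
  have tr_bound: "norm (tr b - tr a) \<le> integral {a..b} (\<lambda>s. norm (\<beta> s))" if "0 \<le> a" "a \<le> b" for a b
    unfolding tr_diff[OF that] by (intro integral_norm_bound_integral ion ionn) auto
  have tr_max: "tr t = tr (max t 0)" for t
    unfolding tr_def by (cases "t < 0") auto
  have tr_lip: "dist (tr a) (tr b) \<le> B * dist a b" for a b
  proof -
    have *: "dist (tr a) (tr b) \<le> B * dist a b" if "a \<le> b" for a b
    proof -
      have "dist (tr a) (tr b) = norm (tr (max b 0) - tr (max a 0))"
        using tr_max[of a] tr_max[of b] by (simp add: dist_norm norm_minus_commute)
      also have "\<dots> \<le> B * (max b 0 - max a 0)"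
      proof -
        have m: "0 \<le> max a 0" "max a 0 \<le> max b 0" using that by auto
        show ?thesis using tr_bound[OF m] nb[OF m(2)] by linarith
      qed
      also have "\<dots> \<le> B * dist a b" using that B0 by (intro mult_left_mono) (auto simp: dist_real_def)
      finally show ?thesis .
    qed
    show ?thesis using *[of a b] *[of b a] by (cases "a \<le> b") (auto simp: dist_commute)
  qed
  have tr_cont: "continuous_on UNIV tr"
    by (rule lipschitz_on_continuous_on[where L=B]) (use tr_lip B0 in \<open>auto simp: lipschitz_on_def\<close>)
  define r where "r t = infdist (tr t) Obs" for t
  have r_cont: "continuous_on UNIV r"
    unfolding r_def by (intro continuous_on_infdist tr_cont)
  have r_lip: "\<bar>r b - r a\<bar> \<le> B * (b - a)" if "a \<le> b" for a b
    using infdist_triangle_abs[of "tr b" Obs "tr a"] tr_lip[of b a] that unfolding r_def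
    by (simp add: dist_real_def)
  have r0: "r 0 = infdist x Obs" unfolding r_def tr_def by simp
  have r_nn: "0 \<le> r t" for t unfolding r_def by (rule infdist_nonneg)
  define w where "w t = exp (- lam * t)" for t
  define F where "F s = (1/2 * (norm (\<beta> s))^2 + c/2 * (r s)^2) * w s" for s
  have F_nn: "0 \<le> F s" for s unfolding F_def w_def using c0 by (intro mult_nonneg_nonneg add_nonneg_nonneg) auto
  have r_meas[measurable]: "r \<in> borel_measurable lebesgue"
    using r_cont by (metis measurable_lborel2 borel_measurable_continuous_onI measurable_completion)
  have w_cont: "continuous_on UNIV w" unfolding w_def by (intro continuous_intros)
  have w_meas[measurable]: "w \<in> borel_measurable lebesgue"
    using w_cont by (metis measurable_lborel2 borel_measurable_continuous_onI measurable_completion)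
  have F_int: "F integrable_on {a..b}" if "0 \<le> a" for a b
  proof -
    have s1: "set_integrable lebesgue {a..b} (\<lambda>s. (norm (\<beta> s))^2 * w s)"
      unfolding set_integrable_def
    proof (rule integrableI_bounded_set_indicator[where B="B^2"])
      show "(\<lambda>s. (norm (\<beta> s))^2 * w s) \<in> borel_measurable lebesgue" by measurable
      show "AE s in lebesgue. s \<in> {a..b} \<longrightarrow> norm ((norm (\<beta> s))^2 * w s) \<le> B^2"
      proof (intro AE_I2 impI)
        fix s assume s: "s \<in> {a..b}"
        have "w s \<le> 1" unfolding w_def using s that lam by auto
        moreover have "(norm (\<beta> s))^2 \<le> B^2" using bnd[of s] by (intro power_mono) auto
        moreover have w0: "0 \<le> w s" unfolding w_def by simp
        ultimately have "(norm (\<beta> s))^2 * w s \<le> B^2 * 1"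
          by (intro mult_mono) auto
        then show "norm ((norm (\<beta> s))^2 * w s) \<le> B^2" using w0 by simp
      qed
    qed (auto simp: emeasure_lborel_Icc_eq)
    have i1: "(\<lambda>s. (norm (\<beta> s))^2 * w s) integrable_on {a..b}"
      using set_lebesgue_integral_eq_integral(1)[OF s1] .
    have i2: "(\<lambda>s. (r s)^2 * w s) integrable_on {a..b}"
    proof -
      have "continuous_on UNIV (\<lambda>s. (r s)^2 * w s)" by (intro continuous_intros r_cont w_cont)
      then show ?thesis by (rule integrable_continuous_interval[OF continuous_on_subset[OF _ subset_UNIV]])
    qed
    have "(\<lambda>s. 1/2 * ((norm (\<beta> s))^2 * w s) + c/2 * ((r s)^2 * w s)) integrable_on {a..b}"
      using integrable_add[OF integrable_cmul[OF i1, of "1/2"] integrable_cmul[OF i2, of "c/2"]] by simp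
    then show ?thesis unfolding F_def by (simp add: algebra_simps)
  qed
  define d0 where "d0 = infdist x Obs"
  have r_le: "r t \<le> d0 + B*t" if "0 \<le> t" for t using r_lip[OF that] r0 unfolding d0_def by simp
  have Fc: "c/2 = 2*C^2 + lam*C" using c by simp
  have step: "C*(r t)^2*w t \<le> C*(r (t+h))^2*w (t+h) + integral {t..t+h} F + (c*M*B + C*B^2 + C*M^2*lam^2)*h^2"
    if t: "0 \<le> t" and h: "0 < h" "h \<le> 1" "lam*h \<le> 1" and M: "d0 + B*(t+h) \<le> M" for t h M
  proof -
    define A where "A = integral {t..t+h} (\<lambda>s. norm (\<beta> s))"
    define r1 where "r1 = r t"
    define w2 where "w2 = w (t+h)"
    define k where "k = lam*C*r1^2 - c*r1*B*h"
    have th: "0 \<le> t" "t \<le> t + h" using t h by auto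
    have A1: "\<bar>r1 - r (t+h)\<bar> \<le> A"
    proof -
      have "\<bar>r1 - r (t+h)\<bar> \<le> dist (tr t) (tr (t+h))"
        unfolding r1_def r_def by (rule infdist_triangle_abs)
      also have "\<dots> = norm (tr (t+h) - tr t)" by (simp add: dist_norm norm_minus_commute)
      also have "\<dots> \<le> A" unfolding A_def by (rule tr_bound[OF th])
      finally show ?thesis .
    qed
    have A2: "A \<le> B*h" using nb[of t "t+h"] h unfolding A_def by simp
    have r1M: "r1 \<le> M"
    proof -
      have "r1 \<le> d0 + B*t" unfolding r1_def by (rule r_le[OF t])
      also have "\<dots> \<le> d0 + B*(t+h)" using B0 h by (simp add: mult_left_mono)
      finally show ?thesis using M by linarith
    qed
    have w2: "0 \<le> w2" "w2 \<le> 1" unfolding w2_def w_def using t h lam by auto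
    have wt: "w t = w2 * exp (lam*h)" unfolding w_def w2_def by (simp add: mult_exp_exp algebra_simps)
    have G: "((\<lambda>s. w2*(2*C*r1*norm (\<beta> s) + k)) has_integral w2*(2*C*r1*A + k*h)) {t..t+h}"
    proof -
      have H0: "((\<lambda>s. norm (\<beta> s)) has_integral A) {t..t+h}" unfolding A_def using ionn by blast
      have H1: "((\<lambda>s. (2*C*r1) * norm (\<beta> s)) has_integral (2*C*r1)*A) {t..t+h}"
        by (rule has_integral_mult_right[OF H0])
      have H2: "((\<lambda>s. k) has_integral k*h) {t..t+h}"
        using has_integral_const_real[of k t "t+h"] h by (simp add: mult.commute)
      have "((\<lambda>s. (2*C*r1) * norm (\<beta> s) + k) has_integral (2*C*r1)*A + k*h) {t..t+h}"
        by (rule has_integral_add[OF H1 H2])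
      from has_integral_mult_right[OF this, of w2] show ?thesis by simp
    qed
    have Fle: "w2*(2*C*r1*norm (\<beta> s) + k) \<le> F s" if s: "s \<in> {t..t+h}" for s
    proof -
      have rs: "\<bar>r s - r1\<bar> \<le> B*h"
      proof -
        have "\<bar>r s - r1\<bar> \<le> B*(s - t)" using r_lip[of t s] s unfolding r1_def by auto
        also have "\<dots> \<le> B*h" using s B0 by (intro mult_left_mono) auto
        finally show ?thesis .
      qed
      have r1n: "0 \<le> r1" unfolding r1_def by (rule r_nn)
      have "r1*(-(B*h)) \<le> r1*(r s - r1)" using rs r1n by (intro mult_left_mono) auto
      then have q1: "-(r1*B*h) \<le> r1*(r s - r1)" by (simp add: algebra_simps)
      have q2: "(r s)^2 = r1^2 + 2*(r1*(r s - r1)) + (r s - r1)^2" by (simp add: power2_eq_square algebra_simps)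
      have q3: "0 \<le> (r s - r1)^2" by simp
      have rs2: "r1^2 - 2*(r1*B*h) \<le> (r s)^2" using q1 q2 q3 by linarith
      have "c/2*(r1^2 - 2*(r1*B*h)) \<le> c/2*(r s)^2" using rs2 c0 by (intro mult_left_mono) auto
      moreover have "c/2*(r1^2 - 2*(r1*B*h)) = 2*C^2*r1^2 + lam*C*r1^2 - c*r1*B*h"
        unfolding c by (simp add: power2_eq_square field_simps)
      moreover have "0 \<le> (norm (\<beta> s) - 2*C*r1)^2" by simp
      moreover have "(norm (\<beta> s) - 2*C*r1)^2 = (norm (\<beta> s))^2 - 4*C*r1*norm (\<beta> s) + 4*C^2*r1^2"
        by (simp add: power2_eq_square algebra_simps)
      ultimately have L: "2*C*r1*norm (\<beta> s) + k \<le> 1/2*(norm (\<beta> s))^2 + c/2*(r s)^2"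
        unfolding k_def by linarith
      have L0: "0 \<le> 1/2*(norm (\<beta> s))^2 + c/2*(r s)^2" using c0 by (intro add_nonneg_nonneg) auto
      have ws: "w2 \<le> w s" unfolding w2_def w_def using s lam by auto
      have "w2*(2*C*r1*norm (\<beta> s) + k) \<le> w2*(1/2*(norm (\<beta> s))^2 + c/2*(r s)^2)"
        using L w2 by (intro mult_left_mono) auto
      also have "\<dots> \<le> w s*(1/2*(norm (\<beta> s))^2 + c/2*(r s)^2)"
        using ws L0 by (intro mult_right_mono) auto
      finally show ?thesis unfolding F_def by (simp add: mult.commute)
    qed
    have I: "w2*(2*C*r1*A + k*h) \<le> integral {t..t+h} F"
      by (rule has_integral_le[OF G integrable_integral[OF F_int[OF t]] Fle])
    have r2n: "0 \<le> r (t+h)" by (rule r_nn)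
    have r1n0: "0 \<le> r1" unfolding r1_def by (rule r_nn)
    have "C*r1^2*(w2*exp(lam*h)) \<le> C*(r (t+h))^2*w2 + integral {t..t+h} F + (c*M*B + C*B^2 + C*M^2*lam^2)*h^2"
      by (rule step_alg[OF C c lam h r1n0 r1M r2n A1 A2 w2 B0 I[unfolded k_def]])
    then show ?thesis unfolding r1_def w2_def wt by simp
  qed
  define KK where "KK T = c*(d0+B*T)*B + C*B^2 + C*(d0+B*T)^2*lam^2" for T
  have ind: "C*d0^2 \<le> C*(r (real k*h))^2*w (real k*h) + integral {0..real k*h} F + real k*KK T*h^2"
    if "k \<le> n" "0 < h" "h \<le> 1" "lam*h \<le> 1" "real n * h \<le> T" for k n h T
    using that(1)
  proof (induction k)
    case 0
    then show ?case using r0 unfolding d0_def w_def by simp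
  next
    case (Suc k)
    have IH: "C*d0^2 \<le> C*(r (real k*h))^2*w (real k*h) + integral {0..real k*h} F + real k*KK T*h^2"
      using Suc by simp
    have t0: "0 \<le> real k * h" using that by simp
    have kh: "real k * h + h \<le> T"
    proof -
      have "real (Suc k) * h \<le> real n * h" using Suc(2) that by (intro mult_right_mono) auto
      then show ?thesis using that by (simp add: algebra_simps)
    qed
    have Mb: "d0 + B*(real k * h + h) \<le> d0 + B*T" using kh B0 by (simp add: mult_left_mono)
    have st: "C*(r (real k*h))^2*w (real k*h) \<le> C*(r (real k*h+h))^2*w (real k*h+h) + integral {real k*h..real k*h+h} F + KK T*h^2"
      using step[OF t0 that(2,3,4) Mb] unfolding KK_def by simp
    have comb: "integral {0..real k*h} F + integral {real k*h..real k*h+h} F = integral {0..real k*h+h} F"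
      using t0 that(2) by (intro Henstock_Kurzweil_Integration.integral_combine F_int) auto
    have e: "real (Suc k) * h = real k * h + h" by (simp add: algebra_simps)
    show ?case unfolding e using IH st comb by (simp add: algebra_simps)
  qed
  have fin: "C*d0^2 \<le> C*(r T)^2*w T + integral {0..T} F" if T: "0 < T" for T
  proof -
    define N where "N = nat \<lceil>T + lam*T\<rceil> + 1"
    have ev: "\<forall>n\<ge>N. C*d0^2 \<le> C*(r T)^2*w T + integral {0..T} F + KK T * T^2 / real n"
    proof (intro allI impI)
      fix n assume n: "N \<le> n"
      have nb1: "T + lam*T + 1 \<le> real n" using n unfolding N_def by linarith
      have npos: "0 < real n" using nb1 T lam by (smt (verit) mult_pos_pos)
      define h where "h = T / real n"
      have h0: "0 < h" unfolding h_def using T npos by simp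
      have h1: "h \<le> 1" unfolding h_def using nb1 npos lam T by (simp add: divide_le_eq) (smt (verit) mult_pos_pos)
      have h2: "lam*h \<le> 1" unfolding h_def using nb1 npos T by (simp add: divide_le_eq)
      have nh: "real n * h = T" unfolding h_def using npos by simp
      have "C*d0^2 \<le> C*(r (real n*h))^2*w (real n*h) + integral {0..real n*h} F + real n*KK T*h^2"
        by (rule ind[OF order_refl h0 h1 h2]) (simp add: nh)
      also have "real n*KK T*h^2 = KK T * T^2 / real n" unfolding h_def using npos by (simp add: power2_eq_square)
      finally show "C*d0^2 \<le> C*(r T)^2*w T + integral {0..T} F + KK T * T^2 / real n" unfolding nh .
    qed
    have lim: "(\<lambda>n. C*(r T)^2*w T + integral {0..T} F + KK T * T^2 / real n) \<longlonglongrightarrow> C*(r T)^2*w T + integral {0..T} F + 0"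
      by (intro tendsto_add tendsto_const lim_const_over_n)
    show ?thesis using LIMSEQ_le_const[OF lim] ev by auto
  qed
  have cost_eq: "cost c lam Obs x \<beta> = (\<integral>\<^sup>+ s. ennreal (F s) * indicator {0..} s \<partial>lebesgue)"
    unfolding cost_def F_def r_def w_def tr_eq by simp
  have G_le: "ennreal (integral {0..T} F) \<le> cost c lam Obs x \<beta>" for T
  proof -
    have "(F has_integral integral {0..T} F) {0..T}" using integrable_integral[OF F_int[of 0 T]] by simp
    then have "((\<lambda>s. if s \<in> {0..T} then F s else 0) has_integral integral {0..T} F) UNIV"
      by (subst has_integral_restrict_UNIV)
    then have "ennreal (integral {0..T} F) = (\<integral>\<^sup>+ s. ennreal (if s \<in> {0..T} then F s else 0) \<partial>lebesgue)"
      by (subst (asm) has_integral_iff_nn_integral_lebesgue) (auto simp: F_nn)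
    also have "\<dots> \<le> (\<integral>\<^sup>+ s. ennreal (F s) * indicator {0..} s \<partial>lebesgue)"
      by (intro nn_integral_mono) (auto split: split_indicator)
    finally show ?thesis unfolding cost_eq by simp
  qed
  show ?thesis
  proof (cases "cost c lam Obs x \<beta>" rule: ennreal_cases)
    case (real v)
    have intv: "integral {0..T} F \<le> v" for T using G_le[of T] real by simp
    have d00: "0 \<le> d0" unfolding d0_def by (rule infdist_nonneg)
    define K0 where "K0 = d0 + B"
    have ev: "\<forall>n\<ge>1. C*d0^2 \<le> C*K0^2*((1+real n)^2*exp(-lam*real n)) + v"
    proof (intro allI impI)
      fix n :: nat assume n: "1 \<le> n"
      define T where "T = real n"
      have T0: "0 < T" using n unfolding T_def by simp
      have rT: "r T \<le> K0*(1+T)"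
      proof -
        have "r T \<le> d0 + B*T" by (rule r_le) (use T0 in simp)
        also have "\<dots> \<le> K0*(1+T)" unfolding K0_def using d00 B0 T0 by (simp add: algebra_simps)
        finally show ?thesis .
      qed
      have "(r T)^2 \<le> (K0*(1+T))^2" using rT r_nn by (intro power_mono) auto
      then have "C*(r T)^2*w T \<le> C*(K0*(1+T))^2*w T"
        using C unfolding w_def by (intro mult_right_mono mult_left_mono) auto
      also have "\<dots> = C*K0^2*((1+real n)^2*exp(-lam*real n))" unfolding w_def T_def by (simp add: power_mult_distrib)
      finally have a: "C*(r T)^2*w T \<le> C*K0^2*((1+real n)^2*exp(-lam*real n))" .
      show "C*d0^2 \<le> C*K0^2*((1+real n)^2*exp(-lam*real n)) + v"
        using fin[OF T0] intv[of T] a by linarith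
    qed
    have lim: "(\<lambda>n. C*K0^2*((1+real n)^2*exp(-lam*real n)) + v) \<longlonglongrightarrow> C*K0^2*0 + v"
      by (intro tendsto_add tendsto_mult_left tendsto_const exp_poly_lim lam)
    have "C*d0^2 \<le> v" using LIMSEQ_le_const[OF lim] ev by auto
    then show ?thesis using real unfolding d0_def by simp
  qed simp
qed



lemma cont_meas_leb: "continuous_on UNIV (f::real \<Rightarrow> 'b::euclidean_space) \<Longrightarrow> f \<in> borel_measurable lebesgue"
  by (metis measurable_lborel2 borel_measurable_continuous_onI measurable_completion)

lemma upper_bound:
  fixes Obs :: "'a::euclidean_space set"
  assumes ne: "Obs \<noteq> {}" and cp: "compact Obs"
    and C: "C > 0" and c: "c = 4*C^2 + 2*lam*C" and lam: "lam > 0"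
  shows "\<exists>\<alpha>. admissible_control \<alpha> \<and> cost c lam Obs x \<alpha> \<le> ennreal (C * (infdist x Obs)^2)"
proof -
  obtain p where p: "p \<in> Obs" "\<And>y. y \<in> Obs \<Longrightarrow> dist x p \<le> dist x y"
    using distance_attains_inf[OF compact_imp_closed[OF cp] ne] by blast
  define D where "D = dist x p"
  have D0: "0 \<le> D" unfolding D_def by simp
  have Dle: "D \<le> infdist x Obs"
    unfolding infdist_notempty[OF ne] D_def by (rule cINF_greatest[OF ne p(2)])
  define k where "k = 2*C"
  have k0: "k > 0" unfolding k_def using C by simp
  define v where "v = x - p"
  have nv: "norm v = D" unfolding v_def D_def by (simp add: dist_norm)
  define \<alpha> where "\<alpha> s = (- (k * exp (- k * s))) *\<^sub>R v" for s
  have \<alpha>_cont: "continuous_on UNIV \<alpha>" unfolding \<alpha>_def by (intro continuous_intros)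
  have \<alpha>_bmeas: "\<alpha> \<in> borel_measurable borel" using \<alpha>_cont by (rule borel_measurable_continuous_onI)
  have adm: "admissible_control \<alpha>"
    unfolding admissible_control_def
  proof
    have "(\<lambda>s. indicator {0..} s *\<^sub>R \<alpha> s) \<in> borel_measurable borel" using \<alpha>_bmeas by measurable
    then show "set_borel_measurable lebesgue {0..} \<alpha>" unfolding set_borel_measurable_def
      by (metis measurable_lborel2 measurable_completion)
    show "\<exists>B. AE s in lebesgue. s \<in> {0..} \<longrightarrow> norm (\<alpha> s) \<le> B"
    proof (intro exI AE_I2 impI)
      fix s :: real assume s: "s \<in> {0..}"
      have "exp (- k * s) \<le> 1" using s k0 by simp
      then show "norm (\<alpha> s) \<le> k*D" unfolding \<alpha>_def using k0 D0 nv by (simp add: mult_left_le_one_le)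
    qed
  qed
  have deriv: "((\<lambda>s. exp(- k * s) *\<^sub>R v) has_vector_derivative \<alpha> s) (at s within X)" for s X
  proof -
    have d1: "((\<lambda>s. exp(- k * s)) has_real_derivative (- k * exp(- k * s))) (at s within X)"
      by (auto intro!: derivative_eq_intros)
    have "((\<lambda>s. exp(- k * s) *\<^sub>R v) has_vector_derivative (exp(- k * s) *\<^sub>R 0 + (- k * exp(- k * s)) *\<^sub>R v)) (at s within X)"
      by (rule has_vector_derivative_scaleR[OF d1 has_vector_derivative_const])
    then show ?thesis unfolding \<alpha>_def by simp
  qed
  have traj_eq: "traj x \<alpha> t = p + exp(- k * t) *\<^sub>R v" if t: "0 \<le> t" for t
  proof -
    have si: "set_integrable lebesgue {0..t} \<alpha>"
      by (rule absolutely_integrable_continuous_real[OF continuous_on_subset[OF \<alpha>_cont subset_UNIV]])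
    have "(\<alpha> has_integral (exp(- k * t) *\<^sub>R v - exp(- k * 0) *\<^sub>R v)) {0..t}"
      by (rule fundamental_theorem_of_calculus[OF t deriv])
    then have "integral {0..t} \<alpha> = exp(- k * t) *\<^sub>R v - v" by (simp add: integral_unique)
    then show ?thesis unfolding traj_def set_lebesgue_integral_eq_integral(2)[OF si] v_def by simp
  qed
  define Q where "Q = (k^2 + c) * D^2 / 2"
  define a where "a = 2*k + lam"
  have a0: "a > 0" unfolding a_def using k0 lam by simp
  have pw: "(1/2 * (norm (\<alpha> s))\<^sup>2 + c/2 * (infdist (traj x \<alpha> s) Obs)\<^sup>2) * exp (- lam * s) \<le> Q * exp (- a * s)"
    if s: "0 \<le> s" for s
  proof -
    define E where "E = exp (- k * s)"
    have E0: "0 \<le> E" unfolding E_def by simp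
    have n\<alpha>: "(norm (\<alpha> s))^2 = k^2 * E^2 * D^2"
      unfolding \<alpha>_def E_def using k0 nv by (simp add: power_mult_distrib)
    have "infdist (traj x \<alpha> s) Obs \<le> dist (traj x \<alpha> s) p" by (rule infdist_le[OF p(1)])
    also have "\<dots> = E * D" unfolding traj_eq[OF s] E_def using nv by (simp add: dist_norm)
    finally have i1: "infdist (traj x \<alpha> s) Obs \<le> E * D" .
    have i2: "(infdist (traj x \<alpha> s) Obs)^2 \<le> E^2 * D^2"
      using power_mono[OF i1 infdist_nonneg, of 2] by (simp add: power_mult_distrib)
    have c0: "c > 0" using C lam c by (simp add: add_pos_pos)
    have "1/2 * (norm (\<alpha> s))\<^sup>2 + c/2 * (infdist (traj x \<alpha> s) Obs)\<^sup>2 \<le> 1/2 * (k^2 * E^2 * D^2) + c/2 * (E^2 * D^2)"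
      unfolding n\<alpha> using i2 c0 by simp
    also have "\<dots> = Q * E^2" unfolding Q_def by (simp add: algebra_simps)
    finally have L: "1/2 * (norm (\<alpha> s))\<^sup>2 + c/2 * (infdist (traj x \<alpha> s) Obs)\<^sup>2 \<le> Q * E^2" .
    have "(1/2 * (norm (\<alpha> s))\<^sup>2 + c/2 * (infdist (traj x \<alpha> s) Obs)\<^sup>2) * exp (- lam * s) \<le> Q * E^2 * exp (- lam * s)"
      using L by (intro mult_right_mono) auto
    also have "Q * E^2 * exp (- lam * s) = Q * exp (- a * s)"
      unfolding E_def a_def by (simp add: power2_eq_square mult_exp_exp algebra_simps)
    finally show ?thesis .
  qed
  have "((\<lambda>s. exp (- a * s)) has_integral exp (- a * 0)/a) {0..}"
    by (rule has_integral_exp_minus_to_infinity[OF a0])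
  then have "((\<lambda>s. Q * exp (- a * s)) has_integral Q * (1/a)) {0..}"
    by (intro has_integral_mult_right) simp
  then have "((\<lambda>s. if s \<in> {0..} then Q * exp (- a * s) else 0) has_integral Q/a) UNIV"
    by (subst has_integral_restrict_UNIV) simp
  moreover have Q0: "0 \<le> Q" unfolding Q_def using C lam c by (simp add: add_pos_pos)
  ultimately have nn: "(\<integral>\<^sup>+ s. ennreal (if s \<in> {0..} then Q * exp (- a * s) else 0) \<partial>lebesgue) = ennreal (Q/a)"
    by (subst (asm) has_integral_iff_nn_integral_lebesgue) auto
  have "cost c lam Obs x \<alpha> \<le> (\<integral>\<^sup>+ s. ennreal (if s \<in> {0..} then Q * exp (- a * s) else 0) \<partial>lebesgue)"
    unfolding cost_def
  proof (rule nn_integral_mono)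
    fix s :: real
    show "ennreal ((1 / 2 * (norm (\<alpha> s))\<^sup>2 + c / 2 * (infdist (traj x \<alpha> s) Obs)\<^sup>2) * exp (- lam * s)) * indicator {0..} s
       \<le> ennreal (if s \<in> {0..} then Q * exp (- a * s) else 0)"
    proof (cases "0 \<le> s")
      case True
      then show ?thesis using pw[OF True] by (simp add: ennreal_leI)
    qed simp
  qed
  also have "\<dots> = ennreal (Q/a)" by (rule nn)
  also have "Q/a = C * D^2"
    unfolding Q_def a_def k_def c using C lam by (simp add: field_simps power2_eq_square)
  also have "ennreal (C * D^2) \<le> ennreal (C * (infdist x Obs)^2)"
    using Dle D0 C by (intro ennreal_leI mult_left_mono power_mono) auto
  finally show ?thesis using adm by blast
qed

lemma admissible_reduce:
  fixes \<alpha> :: "real \<Rightarrow> 'a::euclidean_space"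
  assumes adm: "admissible_control \<alpha>"
  shows "\<exists>\<beta> B. \<beta> \<in> borel_measurable lebesgue \<and> (\<forall>s. norm (\<beta> s) \<le> B) \<and> cost c lam Obs x \<alpha> = cost c lam Obs x \<beta>"
proof -
  obtain B0 where mv: "set_borel_measurable lebesgue {0..} \<alpha>"
    and AEB0: "AE s in lebesgue. s \<in> {0..} \<longrightarrow> norm (\<alpha> s) \<le> B0"
    using adm unfolding admissible_control_def by blast
  define B where "B = max B0 0"
  define v where "v s = indicator {0..} s *\<^sub>R \<alpha> s" for s
  have v_meas[measurable]: "v \<in> borel_measurable lebesgue"
    using mv unfolding set_borel_measurable_def v_def by simp
  define \<beta> where "\<beta> s = (if norm (v s) \<le> B then v s else 0)" for s
  have \<beta>_meas: "\<beta> \<in> borel_measurable lebesgue" unfolding \<beta>_def by measurable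
  have \<beta>_bnd: "\<forall>s. norm (\<beta> s) \<le> B" unfolding \<beta>_def B_def by auto
  have AEv: "AE s in lebesgue. \<beta> s = v s"
    using AEB0 by eventually_elim (auto simp: \<beta>_def v_def B_def split: split_indicator)
  have tr1: "traj x \<alpha> t = traj x v t" for t
  proof -
    have "(\<lambda>s. indicator {0..t} s *\<^sub>R \<alpha> s) = (\<lambda>s. indicator {0..t} s *\<^sub>R v s)"
      by (auto simp: v_def split: split_indicator)
    then show ?thesis unfolding traj_def set_lebesgue_integral_def by simp
  qed
  have tr2: "traj x v t = traj x \<beta> t" for t
  proof -
    have "(LINT s:{0..t}|lebesgue. v s) = (LINT s:{0..t}|lebesgue. \<beta> s)"
    proof -
      have AE': "AE s in lebesgue. s \<in> {0..t} \<longrightarrow> v s = \<beta> s" using AEv by eventually_elim auto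
      show ?thesis by (rule set_lebesgue_integral_cong_AE[OF _ v_meas \<beta>_meas AE']) simp
    qed
    then show ?thesis unfolding traj_def by simp
  qed
  have "cost c lam Obs x \<alpha> = cost c lam Obs x v"
    unfolding cost_def tr1 by (intro nn_integral_cong) (auto simp: v_def split: split_indicator)
  also have "\<dots> = cost c lam Obs x \<beta>"
    unfolding cost_def tr2 by (intro nn_integral_cong_AE) (use AEv in \<open>eventually_elim, simp\<close>)
  finally show ?thesis using \<beta>_meas \<beta>_bnd by blast
qed

theorem mainTheorem7:
  fixes Obs :: "'a::euclidean_space set" and lam c :: real
  assumes "Obs \<noteq> {}" and "compact Obs" and "lam > 0" and "c > 0"
  shows "(- lam + sqrt (lam\<^sup>2 + 4 * c)) / 4 > 0 \<and>
         (\<forall>x. R_val c lam x Obs = ennreal ((- lam + sqrt (lam\<^sup>2 + 4 * c)) / 4 * (infdist x Obs)\<^sup>2))"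
proof -
  define C where "C = (- lam + sqrt (lam\<^sup>2 + 4 * c)) / 4"
  define S where "S = sqrt (lam\<^sup>2 + 4 * c)"
  have S2: "S^2 = lam^2 + 4*c" unfolding S_def using assms by simp
  have Sgt: "S > lam"
  proof -
    have "sqrt (lam^2) < S" unfolding S_def using assms by (intro real_sqrt_less_mono) simp
    then show ?thesis using assms by simp
  qed
  have C0: "C > 0" unfolding C_def S_def[symmetric] using Sgt by simp
  have cC: "c = 4*C^2 + 2*lam*C"
  proof -
    have "4*C^2 + 2*lam*C = (S^2 - lam^2)/4" unfolding C_def S_def[symmetric]
      by (simp add: power2_eq_square field_simps)
    then show ?thesis using S2 by simp
  qed
  have R: "R_val c lam x Obs = ennreal (C * (infdist x Obs)\<^sup>2)" for x
  proof (rule antisym)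
    obtain \<alpha> where a: "admissible_control \<alpha>" "cost c lam Obs x \<alpha> \<le> ennreal (C * (infdist x Obs)^2)"
      using upper_bound[OF assms(1,2) C0 cC assms(3)] by blast
    show "R_val c lam x Obs \<le> ennreal (C * (infdist x Obs)\<^sup>2)"
      unfolding R_val_def using a by (intro INF_lower2[of \<alpha>]) auto
    show "ennreal (C * (infdist x Obs)\<^sup>2) \<le> R_val c lam x Obs"
      unfolding R_val_def
    proof (rule INF_greatest)
      fix \<alpha> :: "real \<Rightarrow> 'a" assume "\<alpha> \<in> {\<alpha>. admissible_control \<alpha>}"
      then have "admissible_control \<alpha>" by simp
      then obtain \<beta> B where b: "\<beta> \<in> borel_measurable lebesgue" "\<forall>s. norm (\<beta> s) \<le> B"
        "cost c lam Obs x \<alpha> = cost c lam Obs x \<beta>"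
        using admissible_reduce by blast
      show "ennreal (C * (infdist x Obs)\<^sup>2) \<le> cost c lam Obs x \<alpha>"
        unfolding b(3) by (rule lower_bound[OF b(1) _ C0 cC assms(3)]) (use b(2) in auto)
    qed
  qed
  show ?thesis using C0 R unfolding C_def by blast
qed

end
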